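(* Let $\mathbb{X},\mathbb{Y}$ be $n$-dimensional real polyhedral Banach spaces, $F$ a facet of $B_{\mathbb{X}}$, and $T:\mathbb{X}\to\mathbb{Y}$ a bijective linear operator that preserves Birkhoff–James orthogonality at each point of $\operatorname{Int}_r F$. Let $u\in\operatorname{Int}_r F$. Then there is a facet $G$ of $B_{\mathbb{Y}}$ such that $\frac{1}{\|Tu\|}T(\operatorname{Int}_r F)\subseteq\operatorname{Int}_r G$.
   Context: A finite-dimensional Banach space is polyhedral if its closed unit ball has finitely many extreme points. A convex subset $F$ of a convex set $G$ is a face of $G$ if whenever $a,b\in G$, $0<t<1$, $(1-t)a+tb\in F$, then $a,b\in F$; its dimension is $\dim\operatorname{span}\{a-b:a,b\in F\}$; a facet is a maximal proper face (for an $n$-dimensional polyhedral space, an $(n-1)$-dimensional face of the unit ball). $\operatorname{aff}(D)$ is the affine hull of $D$, and $\operatorname{Int}_r D=\{x\in D:\exists\varepsilon>0,\ B(x,\varepsilon)\cap\operatorname{aff}(D)\subseteq D\}$ is the relative interior. $u\perp_B v$ means $\|u+\lambda v\|\ge\|u\|$ for all real $\lambda$; $T$ preserves Birkhoff–James orthogonality at $x$ if $x\perp_B w\Rightarrow Tx\perp_B Tw$ for all $w$. *)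

theory Defs
  imports "HOL-Analysis.Analysis"
begin

text \<open>A norm on the vector space real^'n (any n-dimensional real normed space is
isometric to real^'n equipped with some norm).\<close>
definition is_norm :: "('a::real_vector \<Rightarrow> real) \<Rightarrow> bool" where
  "is_norm N \<longleftrightarrow> (\<forall>x. 0 \<le> N x) \<and> (\<forall>x. N x = 0 \<longleftrightarrow> x = 0)
     \<and> (\<forall>c x. N (c *\<^sub>R x) = \<bar>c\<bar> * N x) \<and> (\<forall>x y. N (x + y) \<le> N x + N y)"

definition unit_ball :: "('a::real_vector \<Rightarrow> real) \<Rightarrow> 'a set" where
  "unit_ball N = {x. N x \<le> 1}"

definition polyhedral :: "('a::real_vector \<Rightarrow> real) \<Rightarrow> bool" where
  "polyhedral N \<longleftrightarrow> finite {x. x extreme_point_of unit_ball N}"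

definition bj_orth :: "('a::real_vector \<Rightarrow> real) \<Rightarrow> 'a \<Rightarrow> 'a \<Rightarrow> bool" where
  "bj_orth N u v \<longleftrightarrow> (\<forall>t::real. N (u + t *\<^sub>R v) \<ge> N u)"

definition preserves_bj_at ::
  "('a::real_vector \<Rightarrow> real) \<Rightarrow> ('b::real_vector \<Rightarrow> real) \<Rightarrow> ('a \<Rightarrow> 'b) \<Rightarrow> 'a \<Rightarrow> bool" where
  "preserves_bj_at NX NY T x \<longleftrightarrow> (\<forall>w. bj_orth NX x w \<longrightarrow> bj_orth NY (T x) (T w))"

end

theory Submission imports Defs begin

lemma normD:
  assumes "is_norm N"
  shows "N x \<ge> 0" "N (c *\<^sub>R x) = \<bar>c\<bar> * N x" "N (x + y) \<le> N x + N y"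
    "N x = 0 \<longleftrightarrow> x = 0"
  using assms unfolding is_norm_def by auto

lemma norm_diff_le:
  assumes "is_norm N" shows "N (x - y) \<le> N x + N y"
proof -
  have "N (x - y) \<le> N x + N ((-1) *\<^sub>R y)"
    using normD(3)[OF assms, of x "(-1) *\<^sub>R y"] by simp
  also have "\<dots> = N x + N y" using normD(2)[OF assms, of "-1" y] by simp
  finally show ?thesis .
qed

lemma convex_unit_ball:
  assumes "is_norm N" shows "convex (unit_ball N)"
  unfolding convex_def unit_ball_def
proof (intro allI impI ballI, clarsimp)
  fix x y :: 'a and u v :: real
  assume h: "N x \<le> 1" "N y \<le> 1" "0 \<le> u" "0 \<le> v" "u + v = 1"
  have "N (u *\<^sub>R x + v *\<^sub>R y) \<le> u * N x + v * N y"
    using normD(3)[OF assms, of "u *\<^sub>R x" "v *\<^sub>R y"] normD(2)[OF assms, of u x]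
      normD(2)[OF assms, of v y] h by simp
  also have "\<dots> \<le> u * 1 + v * 1" using h by (intro add_mono mult_left_mono) auto
  finally show "N (u *\<^sub>R x + v *\<^sub>R y) \<le> 1" using h by simp
qed

lemma affine_hull_unit_ball:
  fixes N :: "'a::euclidean_space \<Rightarrow> real"
  assumes "is_norm N" shows "affine hull (unit_ball N) = UNIV"
proof -
  { fix z :: 'a
    define k where "k = N z + 1"
    have k: "k > 0" using normD(1)[OF assms, of z] k_def by simp
    have "N ((1/k) *\<^sub>R z) = (1/k) * N z" using normD(2)[OF assms, of "1/k" z] k by simp
    also have "\<dots> \<le> 1" using k k_def by (simp add: field_simps)
    finally have p: "(1/k) *\<^sub>R z \<in> affine hull (unit_ball N)"
      by (simp add: unit_ball_def hull_inc)
    have z0: "0 \<in> affine hull (unit_ball N)"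
      using normD(4)[OF assms, of 0] by (simp add: unit_ball_def hull_inc)
    have "(1 - k) *\<^sub>R 0 + k *\<^sub>R ((1/k) *\<^sub>R z) \<in> affine hull (unit_ball N)"
      by (rule mem_affine[OF affine_affine_hull z0 p]) simp
    then have "z \<in> affine hull (unit_ball N)" using k by simp }
  then show ?thesis by auto
qed

lemma aff_dim_unit_ball:
  fixes N :: "'a::euclidean_space \<Rightarrow> real"
  assumes "is_norm N" shows "aff_dim (unit_ball N) = int DIM('a)"
  by (metis aff_dim_UNIV aff_dim_affine_hull affine_hull_unit_ball assms)

lemma face_norm1:
  assumes N: "is_norm N" and F: "F face_of unit_ball N" and ne: "F \<noteq> unit_ball N"
    and y: "y \<in> F"
  shows "N y = 1"
proof (rule ccontr)
  assume "N y \<noteq> 1"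
  moreover have "N y \<le> 1" using F y unfolding face_of_def unit_ball_def by auto
  ultimately have lt: "N y < 1" by simp
  have "unit_ball N \<subseteq> F"
  proof
    fix b assume b: "b \<in> unit_ball N"
    show "b \<in> F"
    proof (cases "b = y")
      case True then show ?thesis using y by simp
    next
      case False
      define d where "d = b - y"
      define \<delta> where "\<delta> = (1 - N y) / (N d + 1)"
      have Nd: "N d \<ge> 0" using normD(1)[OF N] by simp
      have dpos: "\<delta> > 0" using lt Nd by (simp add: \<delta>_def)
      have "\<delta> * N d \<le> 1 - N y"
      proof -
        have "\<delta> * N d = (1 - N y) * (N d / (N d + 1))" by (simp add: \<delta>_def)
        also have "\<dots> \<le> (1 - N y) * 1" using lt Nd by (intro mult_left_mono) auto
        finally show ?thesis by simp
      qed
      define p where "p = y - \<delta> *\<^sub>R d"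
      have "N p \<le> N y + N (\<delta> *\<^sub>R d)" unfolding p_def by (rule norm_diff_le[OF N])
      also have "\<dots> = N y + \<delta> * N d" using normD(2)[OF N, of \<delta> d] dpos by simp
      finally have p: "p \<in> unit_ball N" using \<open>\<delta> * N d \<le> 1 - N y\<close> by (simp add: unit_ball_def)
      have pb: "p \<noteq> b"
      proof
        assume "p = b"
        then have "(1 + \<delta>) *\<^sub>R (y - b) = 0" unfolding p_def d_def by (simp add: algebra_simps)
        then show False using dpos False by simp
      qed
      have "y = (1 - \<delta>/(1+\<delta>)) *\<^sub>R p + (\<delta>/(1+\<delta>)) *\<^sub>R b"
      proof -
        have "(1 + \<delta>) *\<^sub>R ((1 - \<delta>/(1+\<delta>)) *\<^sub>R p + (\<delta>/(1+\<delta>)) *\<^sub>R b) = p + \<delta> *\<^sub>R b"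
          using dpos by (simp add: algebra_simps field_simps)
        also have "\<dots> = (1 + \<delta>) *\<^sub>R y" by (simp add: p_def d_def algebra_simps)
        finally show ?thesis using dpos
          by (metis (no_types, lifting) add_pos_pos less_numeral_extra(1) order_less_irrefl scaleR_cancel_left)
      qed
      then have "y \<in> open_segment p b" using pb dpos
        by (auto simp: in_segment intro!: exI[of _ "\<delta>/(1+\<delta>)"])
      then show ?thesis using F p b y unfolding face_of_def by blast
    qed
  qed
  then show False using ne F face_of_imp_subset by blast
qed

lemma orth_lemma:
  fixes N :: "'a::euclidean_space \<Rightarrow> real"
  assumes N: "is_norm N" and F: "F face_of unit_ball N" and ne: "F \<noteq> unit_ball N"
    and x: "x \<in> rel_interior F" and w: "\<And>s. x + s *\<^sub>R w \<in> affine hull F"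
  shows "bj_orth N x w"
  unfolding bj_orth_def
proof (rule allI, rule ccontr)
  fix t :: real
  assume "\<not> N x \<le> N (x + t *\<^sub>R w)"
  moreover have xF: "x \<in> F" using x rel_interior_subset by blast
  moreover have Nx: "N x = 1" using face_norm1[OF N F ne] xF by simp
  ultimately have lt: "N (x + t *\<^sub>R w) < 1" by simp
  obtain e where e: "e > 0" "ball x e \<inter> affine hull F \<subseteq> F"
    using x mem_rel_interior_ball by blast
  have tw: "t *\<^sub>R w \<noteq> 0" using lt Nx by auto
  define k where "k = norm (t *\<^sub>R w)"
  have k: "k > 0" using tw k_def by simp
  define \<sigma> where "\<sigma> = e / (2 * k)"
  have sg: "\<sigma> > 0" using e k by (simp add: \<sigma>_def)
  define p where "p = x + (- \<sigma> * t) *\<^sub>R w"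
  have "dist x p = \<sigma> * k" using sg by (simp add: p_def dist_norm k_def abs_mult)
  also have "\<dots> < e" using e k by (simp add: \<sigma>_def)
  finally have "p \<in> F" using e w[of "- \<sigma> * t"] by (auto simp: p_def)
  then have pB: "p \<in> unit_ball N" using F face_of_imp_subset by blast
  define q where "q = x + t *\<^sub>R w"
  have qB: "q \<in> unit_ball N" using lt by (simp add: unit_ball_def q_def)
  have pq: "p \<noteq> q"
  proof
    assume "p = q"
    then have "(1 + \<sigma>) *\<^sub>R (t *\<^sub>R w) = 0" by (simp add: p_def q_def algebra_simps)
    then show False using sg tw by simp
  qed
  have "x = (1 - \<sigma>/(1+\<sigma>)) *\<^sub>R p + (\<sigma>/(1+\<sigma>)) *\<^sub>R q"
  proof -
    have "(1 + \<sigma>) *\<^sub>R ((1 - \<sigma>/(1+\<sigma>)) *\<^sub>R p + (\<sigma>/(1+\<sigma>)) *\<^sub>R q) = p + \<sigma> *\<^sub>R q"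
      using sg by (simp add: algebra_simps field_simps)
    also have "\<dots> = (1 + \<sigma>) *\<^sub>R x" by (simp add: p_def q_def algebra_simps)
    finally show ?thesis using sg
      by (metis (no_types, lifting) add_pos_pos less_numeral_extra(1) order_less_irrefl scaleR_cancel_left)
  qed
  then have "x \<in> open_segment p q" using pq sg
    by (auto simp: in_segment intro!: exI[of _ "\<sigma>/(1+\<sigma>)"])
  then have "q \<in> F" using F pB qB xF unfolding face_of_def by blast
  then have "N q = 1" using face_norm1[OF N F ne] by simp
  then show False using lt q_def by simp
qed

theorem mainTheorem16:
  fixes NX NY :: "real ^ 'n \<Rightarrow> real"
    and T :: "real ^ 'n \<Rightarrow> real ^ 'n"
    and F :: "(real ^ 'n) set"
    and u :: "real ^ 'n"
  assumes "is_norm NX" and "is_norm NY"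
    and "polyhedral NX" and "polyhedral NY"
    and "F facet_of unit_ball NX"
    and "linear T" and "bij T"
    and "\<forall>x \<in> rel_interior F. preserves_bj_at NX NY T x"
    and "u \<in> rel_interior F"
  shows "\<exists>G. G facet_of unit_ball NY \<and>
           (\<lambda>x. (1 / NY (T u)) *\<^sub>R T x) ` rel_interior F \<subseteq> rel_interior G"
proof -
  note NX = assms(1) and NY = assms(2) and lin = assms(6) and bij = assms(7)
    and pres = assms(8) and uF = assms(9)
  have Ff: "F face_of unit_ball NX" "F \<noteq> {}"
    and Fdim: "aff_dim F = aff_dim (unit_ball NX) - 1"
    using assms(5) unfolding facet_of_def by auto
  have Fne: "F \<noteq> unit_ball NX" using Fdim by auto
  have cF: "convex F" using Ff face_of_imp_convex by blast
  have uF': "u \<in> F" using uF rel_interior_subset by blast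
  have Nu: "NX u = 1" using face_norm1[OF NX Ff(1) Fne uF'] .
  have injT: "inj T" using bij bij_is_inj by blast
  have T0: "T 0 = 0" using lin linear_0 by blast
  have u0: "u \<noteq> 0" using Nu normD(4)[OF NX, of 0] by auto
  have Tu0: "T u \<noteq> 0" using u0 injT T0 by (metis injD)
  define c where "c = NY (T u)"
  have c0: "c \<ge> 0" "c \<noteq> 0" using Tu0 normD(1,4)[OF NY, of "T u"] unfolding c_def by auto
  have c: "c > 0" using c0 by linarith
  define A where "A = affine hull F"
  have uA: "u \<in> A" unfolding A_def by (rule hull_inc[OF uF'])
  have affA: "affine A" by (simp add: A_def)
  define V where "V = (\<lambda>x. x - u) ` A"
  have subV: "subspace V" unfolding V_def by (rule affine_diffs_subspace_subtract[OF affA uA])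
  have spV: "span V = V" using subV by (simp add: span_eq_iff)
  have diffV: "x - u \<in> V" if "x \<in> A" for x unfolding V_def using that by blast
  have orthX: "bj_orth NX x v" if x: "x \<in> rel_interior F" and v: "v \<in> V" for x v
  proof (rule orth_lemma[OF NX Ff(1) Fne x])
    fix s
    obtain y where y: "y \<in> A" "v = y - u" using v unfolding V_def by blast
    have xA: "x \<in> A" unfolding A_def by (rule hull_inc) (use x rel_interior_subset in blast)
    show "x + s *\<^sub>R v \<in> affine hull F"
      using mem_affine_3_minus[OF affA xA y(1) uA, of s] y A_def by simp
  qed
  have orthY: "bj_orth NY (T x) (T v)" if x: "x \<in> rel_interior F" and v: "v \<in> V" for x v
    using pres x orthX[OF x v] unfolding preserves_bj_at_def by blast
  have uV: "u \<notin> V"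
  proof
    assume "u \<in> V"
    then have "- u \<in> V" using subV subspace_neg by blast
    then have "bj_orth NX u (- u)" using orthX uF by blast
    then have "NX (u + 1 *\<^sub>R (- u)) \<ge> NX u" unfolding bj_orth_def by blast
    then show False using Nu normD(4)[OF NX, of 0] by simp
  qed
  have aX: "aff_dim (unit_ball NX) = int DIM(real^'n)" by (rule aff_dim_unit_ball[OF NX])
  have aY: "aff_dim (unit_ball NY) = int DIM(real^'n)" by (rule aff_dim_unit_ball[OF NY])
  have "aff_dim F = int (dim V)"
    using aff_dim_eq_dim_subtract[of u A] uA affA by (simp add: V_def A_def hull_inc)
  then have dimV: "int (dim V) = int DIM(real^'n) - 1" using Fdim aX by simp
  have "dim (insert u V) = DIM(real^'n)" proof -
    have "u \<notin> span V" by (subst spV) (rule uV)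
    then have "dim (insert u V) = dim V + 1" by (simp add: dim_insert)
    then show ?thesis using dimV by linarith
  qed
  then have spIns: "span (insert u V) = UNIV" using dim_eq_full by blast
  have "dim V < DIM(real^'n)" using dimV by linarith
  then obtain a where a: "a \<noteq> 0" "\<And>y. y \<in> span V \<Longrightarrow> orthogonal a y"
    using orthogonal_to_subspace_exists by blast
  have aV: "a \<bullet> v = 0" if "v \<in> V" for v using a(2) that spV by (simp add: orthogonal_def)
  have decomp: "\<exists>k. z - k *\<^sub>R u \<in> V" for z
    using spIns span_insert[of u V] spV by auto
  have au: "a \<bullet> u \<noteq> 0"
  proof
    assume h: "a \<bullet> u = 0"
    obtain k where "a - k *\<^sub>R u \<in> V" using decomp by blast
    then have "a \<bullet> (a - k *\<^sub>R u) = 0" using aV by blast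
    then have "a \<bullet> a = 0" using h by (simp add: inner_diff_right)
    then show False using a(1) by simp
  qed
  define \<phi> where "\<phi> z = (a \<bullet> z) / (a \<bullet> u)" for z
  have \<phi>u: "\<phi> u = 1" using au by (simp add: \<phi>_def)
  have \<phi>V: "\<phi> v = 0" if "v \<in> V" for v using aV[OF that] by (simp add: \<phi>_def)
  have lin\<phi>: "linear \<phi>" unfolding \<phi>_def
    by (rule linearI) (auto simp: inner_add_right add_divide_distrib)
  have decomp2: "z - \<phi> z *\<^sub>R u \<in> V" for z
  proof -
    obtain k where k: "z - k *\<^sub>R u \<in> V" using decomp by blast
    have "\<phi> (z - k *\<^sub>R u) = 0" using \<phi>V[OF k] .
    then have "\<phi> z = k" using lin\<phi> \<phi>u by (simp add: linear_diff linear_scale)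
    then show ?thesis using k by simp
  qed
  have \<phi>A: "\<phi> x = 1" if "x \<in> A" for x
  proof -
    have "\<phi> (x - u) = 0" using \<phi>V diffV that by blast
    then show ?thesis using lin\<phi> \<phi>u by (simp add: linear_diff)
  qed
  have claimA: "c * \<phi> z \<le> NY (T z)" for z
  proof (cases "\<phi> z = 0")
    case True then show ?thesis using normD(1)[OF NY] by simp
  next
    case False
    define s where "s = \<phi> z"
    have s0: "s \<noteq> 0" using False s_def by simp
    define v where "v = z - s *\<^sub>R u"
    have v: "v \<in> V" using decomp2 s_def v_def by simp
    have ge: "NY (T u + (1/s) *\<^sub>R T v) \<ge> c" using orthY[OF uF v] unfolding c_def bj_orth_def by blast
    have Tv: "T v = T z - s *\<^sub>R T u" by (simp add: v_def linear_diff[OF lin] linear_scale[OF lin])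
    have "s *\<^sub>R (T u + (1/s) *\<^sub>R T v) = T z"
      using s0 by (simp add: Tv scaleR_add_right)
    then have "NY (T z) = \<bar>s\<bar> * NY (T u + (1/s) *\<^sub>R T v)" using normD(2)[OF NY] by metis
    also have "\<dots> \<ge> \<bar>s\<bar> * c" using ge by (simp add: mult_left_mono)
    finally have "\<bar>s\<bar> * c \<le> NY (T z)" .
    moreover have "c * s \<le> \<bar>s\<bar> * c" using c by (simp add: mult.commute mult_left_mono)
    ultimately show ?thesis using s_def by simp
  qed
  have claimB: "NY (T x) = c" if x: "x \<in> rel_interior F" for x
  proof -
    have xA: "x \<in> A" unfolding A_def by (rule hull_inc) (use x rel_interior_subset in blast)
    have v1: "x - u \<in> V" using diffV xA .
    have v2: "u - x \<in> V" using subV v1 subspace_neg by (metis minus_diff_eq)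
    have "NY (T u + 1 *\<^sub>R T (x - u)) \<ge> NY (T u)" using orthY[OF uF v1] unfolding bj_orth_def by blast
    moreover have "NY (T x + 1 *\<^sub>R T (u - x)) \<ge> NY (T x)" using orthY[OF x v2] unfolding bj_orth_def by blast
    ultimately show ?thesis using lin c_def by (simp add: linear_diff)
  qed
  have linI: "linear (inv T)" by (rule inj_linear_imp_inv_linear[OF lin injT])
  define \<psi> where "\<psi> y = c * \<phi> (inv T y)" for y
  have lin\<psi>: "linear \<psi>" unfolding \<psi>_def
    by (rule linearI) (simp_all add: linear_add[OF linI] linear_add[OF lin\<phi>]
        linear_scale[OF linI] linear_scale[OF lin\<phi>] algebra_simps)
  have surjT: "surj T" using bij bij_is_surj by blast
  have \<psi>le: "\<psi> y \<le> NY y" for y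
    using claimA[of "inv T y"] surj_f_inv_f[OF surjT, of y] by (simp add: \<psi>_def)
  have \<psi>T: "\<psi> (T z) = c * \<phi> z" for z using injT by (simp add: \<psi>_def)
  define G where "G = {y. NY y \<le> 1 \<and> \<psi> y = 1}"
  have GB: "G \<subseteq> unit_ball NY" by (auto simp: G_def unit_ball_def)
  have cvB: "convex (unit_ball NY)" by (rule convex_unit_ball[OF NY])
  have lincomb: "\<psi> ((1 - t) *\<^sub>R p + t *\<^sub>R q) = (1 - t) * \<psi> p + t * \<psi> q" for t p q
    by (simp add: linear_add[OF lin\<psi>] linear_scale[OF lin\<psi>])
  have cvG: "convex G"
    unfolding convex_alt
  proof (intro ballI allI impI)
    fix x y and t :: real
    assume x: "x \<in> G" and y: "y \<in> G" and t: "0 \<le> t \<and> t \<le> 1"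
    have "(1 - t) *\<^sub>R x + t *\<^sub>R y \<in> unit_ball NY"
      using convexD_alt[OF cvB, of x y t] x y t GB by blast
    moreover have "\<psi> ((1 - t) *\<^sub>R x + t *\<^sub>R y) = 1" using x y lincomb[of t x y] by (simp add: G_def)
    ultimately show "(1 - t) *\<^sub>R x + t *\<^sub>R y \<in> G" by (simp add: G_def unit_ball_def)
  qed
  have key: "\<forall>p\<in>unit_ball NY. \<forall>q\<in>unit_ball NY. \<forall>x\<in>G. x \<in> open_segment p q \<longrightarrow> p \<in> G \<and> q \<in> G"
  proof (intro ballI impI)
    fix p q x assume p: "p \<in> unit_ball NY" and q: "q \<in> unit_ball NY" and x: "x \<in> G"
      and xs: "x \<in> open_segment p q"
    obtain t where t: "0 < t" "t < 1" "x = (1 - t) *\<^sub>R p + t *\<^sub>R q" using xs by (auto simp: in_segment)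
    have pl: "\<psi> p \<le> 1" using \<psi>le[of p] p by (simp add: unit_ball_def)
    have ql: "\<psi> q \<le> 1" using \<psi>le[of q] q by (simp add: unit_ball_def)
    have "(1 - t) * \<psi> p + t * \<psi> q = 1" using x t lincomb by (simp add: G_def)
    note eq = this
    have t1: "0 < 1 - t" using t by simp
    have a1: "(1 - t) * \<psi> p \<le> 1 - t" using mult_left_mono[OF pl, of "1 - t"] t1 by simp
    have a2: "t * \<psi> q \<le> t" using mult_left_mono[OF ql, of t] t by simp
    have "\<psi> p = 1"
    proof (rule ccontr)
      assume "\<psi> p \<noteq> 1"
      then have "\<psi> p < 1" using pl by simp
      then have "(1 - t) * \<psi> p < (1 - t) * 1" using mult_strict_left_mono t1 by blast
      then have "(1 - t) * \<psi> p < 1 - t" by simp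
      then show False using eq a2 by linarith
    qed
    moreover have "\<psi> q = 1"
    proof (rule ccontr)
      assume "\<psi> q \<noteq> 1"
      then have "\<psi> q < 1" using ql by simp
      then have "t * \<psi> q < t * 1" using mult_strict_left_mono t by blast
      then have "t * \<psi> q < t" by simp
      then show False using eq a1 by linarith
    qed
    ultimately have "\<psi> p = 1 \<and> \<psi> q = 1" by simp
    then show "p \<in> G \<and> q \<in> G" using p q by (simp add: G_def unit_ball_def)
  qed
  have Gface: "G face_of unit_ball NY"
    unfolding face_of_def using GB cvG key by blast
  define f where "f x = (1 / NY (T u)) *\<^sub>R T x" for x
  have linf: "linear f"
    by (rule linearI) (simp_all add: f_def linear_add[OF lin] linear_scale[OF lin] scaleR_add_right)
  have injf: "inj f"
  proof (rule injI)
    fix x y assume "f x = f y"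
    then have "T x = T y" using c by (simp add: f_def c_def[symmetric])
    then show "x = y" using injT by (simp add: inj_eq)
  qed
  define S where "S = f ` rel_interior F"
  have SG: "S \<subseteq> G"
  proof
    fix y assume "y \<in> S"
    then obtain x where x: "x \<in> rel_interior F" "y = f x" by (auto simp: S_def)
    have xA: "x \<in> A" unfolding A_def by (rule hull_inc) (use x rel_interior_subset in blast)
    have "NY y = (1/c) * NY (T x)" using x c normD(2)[OF NY] by (simp add: f_def c_def)
    then have "NY y = 1" using claimB[OF x(1)] c by simp
    moreover have "\<psi> y = (1/c) * \<psi> (T x)" using x linear_scale[OF lin\<psi>] by (simp add: f_def c_def)
    then have "\<psi> y = 1" using \<psi>T \<phi>A[OF xA] c by simp
    ultimately show "y \<in> G" by (simp add: G_def)
  qed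
  have Sne: "S \<noteq> {}" using uF by (auto simp: S_def)
  have aS: "aff_dim S = aff_dim F"
    using rel_interior_aff_dim[OF cF] linf injf by (simp add: S_def)
  have G0: "0 \<in> unit_ball NY" "0 \<notin> G"
    using normD(4)[OF NY, of 0] linear_0[OF lin\<psi>] by (auto simp: unit_ball_def G_def)
  have "aff_dim G < aff_dim (unit_ball NY)"
    using face_of_aff_dim_lt[OF cvB Gface] G0 by blast
  moreover have "aff_dim S \<le> aff_dim G" using aff_dim_subset[OF SG] .
  ultimately have aG: "aff_dim G = aff_dim (unit_ball NY) - 1" using aS Fdim aX aY by linarith
  have facet: "G facet_of unit_ball NY"
    unfolding facet_of_def using Gface aG SG Sne by auto
  have "affine hull S = affine hull G"
  proof (rule affine_dim_equal)
    show "affine hull S \<subseteq> affine hull G" using SG hull_mono by blast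
    show "aff_dim (affine hull S) = aff_dim (affine hull G)" using aS Fdim aX aY aG by simp
  qed (use Sne in auto)
  moreover have "rel_interior S = S"
  proof -
    have "rel_interior S = f ` rel_interior (rel_interior F)" unfolding S_def
      by (rule rel_interior_injective_linear_image[OF linear_conv_bounded_linear[THEN iffD1, OF linf] injf])
    then show ?thesis using rel_interior_rel_interior[OF cF] by (simp add: S_def)
  qed
  ultimately have "S \<subseteq> rel_interior G" using subset_rel_interior[OF SG] by simp
  then show ?thesis using facet unfolding S_def f_def by blast
qed
end
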